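(* Let $G$ be a connected graph, let $M \subseteq V(G)$ be a longest path transversal of $G$, and let $D \subseteq M$ be a connected dominating set of $G[M]$. Let $C_1,\dots,C_t$ be the connected components of $G \setminus M$, and let $C_{\max}$ be a path-maximal component with respect to $M$. Let $S \subseteq M$ be a set that dominates $\mathsf{bd}(C_{\max},M)$. Then $D \cup S$ is a longest path transversal of $G$.
   Context: All graphs are finite, simple. A longest path of a connected graph $G$ is a path of maximum length (number of edges) in $G$. A longest path transversal of $G$ is a set $S \subseteq V(G)$ such that every longest path of $G$ contains at least one vertex of $S$. For $X,Y\subseteq V(G)$, $\mathsf{bd}(X,Y)=\{x\in X : x \text{ has a neighbor in } Y\}$. A set $D$ is a connected dominating set of a graph $F$ if $F[D]$ is connected and every vertex of $F$ is in $D$ or adjacent to a vertex of $D$; a set $S$ dominates a set $Z$ if every vertex of $Z$ is in $S$ or has a neighbor in $S$. Given $M\subseteq V(G)$ and the components $C_1,\dots,C_t$ of $G\setminus M$, let $t_i$ be the length of a longest path of $G[C_i]$ having at least one endpoint in $\mathsf{bd}(C_i,M)$; a component $C_{\max}$ is path-maximal with respect to $M$ if $t_{\max}\ge t_i$ for all $1\le i\le t$. *)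

theory Defs
  imports Main
begin

definition graph :: "'a set \<Rightarrow> ('a \<Rightarrow> 'a \<Rightarrow> bool) \<Rightarrow> bool" where
  "graph V E \<longleftrightarrow> finite V \<and> (\<forall>u v. E u v \<longrightarrow> u \<in> V \<and> v \<in> V)
     \<and> (\<forall>u v. E u v \<longrightarrow> E v u) \<and> (\<forall>v. \<not> E v v)"

definition is_path_in :: "('a \<Rightarrow> 'a \<Rightarrow> bool) \<Rightarrow> 'a set \<Rightarrow> 'a list \<Rightarrow> bool" where
  "is_path_in E X p \<longleftrightarrow> p \<noteq> [] \<and> distinct p \<and> set p \<subseteq> X
     \<and> (\<forall>i. Suc i < length p \<longrightarrow> E (p ! i) (p ! Suc i))"

definition plen :: "'a list \<Rightarrow> nat" where
  "plen p = length p - 1"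

definition connected_set :: "('a \<Rightarrow> 'a \<Rightarrow> bool) \<Rightarrow> 'a set \<Rightarrow> bool" where
  "connected_set E X \<longleftrightarrow> X \<noteq> {} \<and>
     (\<forall>u\<in>X. \<forall>v\<in>X. \<exists>p. is_path_in E X p \<and> hd p = u \<and> last p = v)"

definition longest_path :: "'a set \<Rightarrow> ('a \<Rightarrow> 'a \<Rightarrow> bool) \<Rightarrow> 'a list \<Rightarrow> bool" where
  "longest_path V E p \<longleftrightarrow> is_path_in E V p \<and> (\<forall>q. is_path_in E V q \<longrightarrow> plen q \<le> plen p)"

definition lp_transversal :: "'a set \<Rightarrow> ('a \<Rightarrow> 'a \<Rightarrow> bool) \<Rightarrow> 'a set \<Rightarrow> bool" where
  "lp_transversal V E S \<longleftrightarrow> S \<subseteq> V \<and> (\<forall>p. longest_path V E p \<longrightarrow> set p \<inter> S \<noteq> {})"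

definition bd :: "('a \<Rightarrow> 'a \<Rightarrow> bool) \<Rightarrow> 'a set \<Rightarrow> 'a set \<Rightarrow> 'a set" where
  "bd E X Y = {x \<in> X. \<exists>y\<in>Y. E x y}"

definition dominates :: "('a \<Rightarrow> 'a \<Rightarrow> bool) \<Rightarrow> 'a set \<Rightarrow> 'a set \<Rightarrow> bool" where
  "dominates E S Z \<longleftrightarrow> (\<forall>z\<in>Z. z \<in> S \<or> (\<exists>s\<in>S. E z s))"

definition connected_dominating_set :: "('a \<Rightarrow> 'a \<Rightarrow> bool) \<Rightarrow> 'a set \<Rightarrow> 'a set \<Rightarrow> bool" where
  "connected_dominating_set E F D \<longleftrightarrow> D \<subseteq> F \<and> connected_set E D \<and> dominates E D F"

definition component :: "('a \<Rightarrow> 'a \<Rightarrow> bool) \<Rightarrow> 'a set \<Rightarrow> 'a set \<Rightarrow> bool" where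
  "component E X C \<longleftrightarrow> C \<subseteq> X \<and> connected_set E C \<and>
     (\<forall>C'. C \<subseteq> C' \<and> C' \<subseteq> X \<and> connected_set E C' \<longrightarrow> C' = C)"

definition tval :: "('a \<Rightarrow> 'a \<Rightarrow> bool) \<Rightarrow> 'a set \<Rightarrow> 'a set \<Rightarrow> nat" where
  "tval E M C = Max {plen p | p. is_path_in E C p \<and>
       (hd p \<in> bd E C M \<or> last p \<in> bd E C M)}"

definition path_maximal :: "'a set \<Rightarrow> ('a \<Rightarrow> 'a \<Rightarrow> bool) \<Rightarrow> 'a set \<Rightarrow> 'a set \<Rightarrow> bool" where
  "path_maximal V E M Cmax \<longleftrightarrow> component E (V - M) Cmax \<and>
     (\<forall>C. component E (V - M) C \<longrightarrow> tval E M C \<le> tval E M Cmax)"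

end

theory Submission imports Defs begin

lemma succ_nth: "(\<forall>i. Suc i < length p \<longrightarrow> E (p ! i) (p ! Suc i)) \<longleftrightarrow> successively E p"
proof (induction E p rule: successively.induct)
  case (3 E x y xs)
  show ?case
  proof
    assume H: "\<forall>i. Suc i < length (x # y # xs) \<longrightarrow> E ((x # y # xs) ! i) ((x # y # xs) ! Suc i)"
    have "E x y" using H[rule_format, of 0] by simp
    moreover have "\<forall>i. Suc i < length (y # xs) \<longrightarrow> E ((y # xs) ! i) ((y # xs) ! Suc i)"
      using H by (metis Suc_less_eq length_Cons nth_Cons_Suc)
    ultimately show "successively E (x # y # xs)" using 3 by simp
  next
    assume "successively E (x # y # xs)"
    then have "E x y" "\<forall>i. Suc i < length (y # xs) \<longrightarrow> E ((y # xs) ! i) ((y # xs) ! Suc i)" using 3 by auto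
    then show "\<forall>i. Suc i < length (x # y # xs) \<longrightarrow> E ((x # y # xs) ! i) ((x # y # xs) ! Suc i)"
      by (metis Suc_less_eq length_Cons less_Suc_eq_0_disj nth_Cons_0 nth_Cons_Suc)
  qed
qed auto

lemma path_def2: "is_path_in E X p \<longleftrightarrow> p \<noteq> [] \<and> distinct p \<and> set p \<subseteq> X \<and> successively E p"
  unfolding is_path_in_def succ_nth ..

lemma path_mono: "is_path_in E X p \<Longrightarrow> X \<subseteq> Y \<Longrightarrow> is_path_in E Y p"
  unfolding path_def2 by auto

lemma path_append: "is_path_in E X p \<Longrightarrow> is_path_in E X q \<Longrightarrow> set p \<inter> set q = {} \<Longrightarrow> E (last p) (hd q)
  \<Longrightarrow> is_path_in E X (p @ q)"
  unfolding path_def2 by (auto simp: successively_append_iff)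

lemma path_split: "is_path_in E X (p @ q) \<Longrightarrow> p \<noteq> [] \<Longrightarrow> q \<noteq> [] \<Longrightarrow>
   is_path_in E X p \<and> is_path_in E X q \<and> set p \<inter> set q = {} \<and> E (last p) (hd q)"
  unfolding path_def2 by (auto simp: successively_append_iff)

lemma path_rev: "(\<forall>u v. E u v \<longrightarrow> E v u) \<Longrightarrow> is_path_in E X p \<Longrightarrow> is_path_in E X (rev p)"
  unfolding path_def2 by (auto elim: successively_mono)

lemma path_single: "x \<in> X \<Longrightarrow> is_path_in E X [x]"
  unfolding path_def2 by auto

lemma plen_append: "p \<noteq> [] \<Longrightarrow> q \<noteq> [] \<Longrightarrow> plen (p @ q) = plen p + plen q + 1"
  unfolding plen_def by (cases p; cases q) auto

lemma finite_paths: "finite X \<Longrightarrow> finite {p. is_path_in E X p}"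
  by (rule finite_subset[OF _ finite_subset_distinct]) (auto simp: path_def2)


lemma cross_aux: "hd p \<in> A \<Longrightarrow> y \<in> set p \<Longrightarrow> y \<notin> A \<Longrightarrow>
  \<exists>p1 p2. p = p1 @ p2 \<and> p1 \<noteq> [] \<and> p2 \<noteq> [] \<and> last p1 \<in> A \<and> hd p2 \<notin> A"
proof (induction p)
  case Nil then show ?case by simp
next
  case (Cons a p)
  show ?case
  proof (cases "p = []")
    case True then show ?thesis using Cons by auto
  next
    case False
    show ?thesis
    proof (cases "hd p \<in> A")
      case True
      have "y \<in> set p" using Cons by auto
      from Cons.IH[OF True this Cons(4)] obtain p1 p2 where "p = p1 @ p2" "p1 \<noteq> []" "p2 \<noteq> []" "last p1 \<in> A" "hd p2 \<notin> A" by blast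
      then show ?thesis by (intro exI[of _ "a # p1"] exI[of _ p2]) auto
    next
      case f: False
      then show ?thesis using Cons False by (intro exI[of _ "[a]"] exI[of _ p]) auto
    qed
  qed
qed

lemma cross: "x \<in> set p \<Longrightarrow> x \<in> A \<Longrightarrow> y \<in> set p \<Longrightarrow> y \<notin> A \<Longrightarrow>
  \<exists>p1 p2. p = p1 @ p2 \<and> p1 \<noteq> [] \<and> p2 \<noteq> [] \<and> (last p1 \<in> A \<longleftrightarrow> hd p2 \<notin> A)"
proof (cases "hd p \<in> A")
  case True
  assume "y \<in> set p" "y \<notin> A"
  from cross_aux[OF True this] show ?thesis by blast
next
  case False
  assume "x \<in> set p" "x \<in> A"
  from cross_aux[of p "- A" x] False this show ?thesis by auto
qed

lemma subpath: "is_path_in E X (p1 @ p2 @ p3) \<Longrightarrow> p2 \<noteq> [] \<Longrightarrow> is_path_in E X p2"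
  unfolding path_def2 by (auto simp: successively_append_iff)

lemma path_connected:
  assumes sym: "\<forall>u v. E u v \<longrightarrow> E v u" and p: "is_path_in E X p"
  shows "connected_set E (set p)"
  unfolding connected_set_def
proof (intro conjI ballI)
  show "set p \<noteq> {}" using p by (auto simp: path_def2)
  fix u v assume u: "u \<in> set p" and v: "v \<in> set p"
  have pp: "is_path_in E (set p) p" using p by (auto simp: path_def2)
  obtain a1 a2 where A: "p = a1 @ u # a2" using split_list[OF u] by blast
  show "\<exists>q. is_path_in E (set p) q \<and> hd q = u \<and> last q = v"
  proof (cases "v \<in> set (u # a2)")
    case True
    then obtain b1 b2 where B: "u # a2 = b1 @ v # b2" using split_list by metis
    have "is_path_in E (set p) (b1 @ [v])"
      using subpath[of E "set p" a1 "b1 @ [v]" b2] pp A B by simp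
    moreover have "hd (b1 @ [v]) = u" using B by (cases b1) auto
    ultimately show ?thesis by (intro exI[of _ "b1 @ [v]"]) auto
  next
    case False
    then have "v \<in> set a1" using v A by auto
    then obtain b1 b2 where B: "a1 = b1 @ v # b2" using split_list by metis
    have "is_path_in E (set p) (v # b2 @ [u])"
      using subpath[of E "set p" b1 "v # b2 @ [u]" a2] pp A B by simp
    then have "is_path_in E (set p) (rev (v # b2 @ [u]))" using path_rev[OF sym] by blast
    then show ?thesis by (intro exI[of _ "rev (v # b2 @ [u])"]) auto
  qed
qed

lemma connected_insert:
  assumes sym: "\<forall>u v. E u v \<longrightarrow> E v u" and C: "connected_set E C" and c: "c \<in> C" and w: "w \<notin> C"
    and e: "E c w"
  shows "connected_set E (insert w C)"
  unfolding connected_set_def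
proof (intro conjI ballI)
  show "insert w C \<noteq> {}" by simp
  fix u v assume u: "u \<in> insert w C" and v: "v \<in> insert w C"
  have sub: "C \<subseteq> insert w C" by auto
  have wp: "is_path_in E (insert w C) [w]" by (rule path_single) simp
  show "\<exists>p. is_path_in E (insert w C) p \<and> hd p = u \<and> last p = v"
  proof (cases "u = w")
    case True
    show ?thesis
    proof (cases "v = w")
      case True then show ?thesis using \<open>u = w\<close> wp by (intro exI[of _ "[w]"]) auto
    next
      case False
      then have "v \<in> C" using v by auto
      then obtain q where q: "is_path_in E C q" "hd q = c" "last q = v" using C c unfolding connected_set_def by blast
      have "is_path_in E (insert w C) ([w] @ q)"
        apply (rule path_append[OF wp path_mono[OF q(1) sub]])
        using q w e sym by (auto simp: path_def2)
      then show ?thesis using True q by (intro exI[of _ "[w] @ q"]) (auto simp: path_def2)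
    qed
  next
    case False
    then have uC: "u \<in> C" using u by auto
    show ?thesis
    proof (cases "v = w")
      case True
      obtain q where q: "is_path_in E C q" "hd q = u" "last q = c" using C c uC unfolding connected_set_def by blast
      have "is_path_in E (insert w C) (q @ [w])"
        apply (rule path_append[OF path_mono[OF q(1) sub] wp])
        using q w e sym by (auto simp: path_def2)
      then show ?thesis using True q by (intro exI[of _ "q @ [w]"]) (auto simp: path_def2)
    next
      case False
      then have "v \<in> C" using v by auto
      then obtain q where q: "is_path_in E C q" "hd q = u" "last q = v" using C uC unfolding connected_set_def by blast
      then show ?thesis using path_mono[OF q(1) sub] by blast
    qed
  qed
qed

lemma component_closed:
  assumes sym: "\<forall>u v. E u v \<longrightarrow> E v u" and C: "component E X C" and c: "c \<in> C" and w: "w \<in> X" and e: "E c w"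
  shows "w \<in> C"
proof (rule ccontr)
  assume "w \<notin> C"
  have "connected_set E (insert w C)" using connected_insert[OF sym _ c \<open>w \<notin> C\<close> e] C
    unfolding component_def by blast
  then have "insert w C = C" using C w unfolding component_def by blast
  then show False using \<open>w \<notin> C\<close> by blast
qed

lemma component_exists:
  assumes fin: "finite X" and K: "connected_set E K" and KX: "K \<subseteq> X"
  shows "\<exists>C. component E X C \<and> K \<subseteq> C"
proof -
  let ?F = "{C. connected_set E C \<and> K \<subseteq> C \<and> C \<subseteq> X}"
  have fF: "finite ?F" by (rule finite_subset[of _ "Pow X"]) (use fin in auto)
  have ne: "K \<in> ?F" using K KX by auto
  obtain C where C: "C \<in> ?F" "\<And>C'. C' \<in> ?F \<Longrightarrow> card C' \<le> card C"
  proof -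
    have "\<forall>y. y \<in> ?F \<longrightarrow> card y < Suc (card X)"
      using fin by (auto simp: le_imp_less_Suc card_mono)
    then show ?thesis using ex_has_greatest_nat[of "\<lambda>C. C \<in> ?F" K card "Suc (card X)"] ne that by blast
  qed
  have "component E X C"
    unfolding component_def
  proof (intro conjI allI impI)
    show "C \<subseteq> X" "connected_set E C" using C by auto
    fix C' assume H: "C \<subseteq> C' \<and> C' \<subseteq> X \<and> connected_set E C'"
    then have "C' \<in> ?F" using C by auto
    then have "card C' \<le> card C" using C by auto
    moreover have "finite C'" using H fin finite_subset by blast
    ultimately show "C' = C" using H card_seteq by blast
  qed
  then show ?thesis using C by auto
qed


lemma bridge:
  assumes sym: "\<forall>u v. E u v \<longrightarrow> E v u" and cds: "connected_dominating_set E M D"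
    and m: "m \<in> M" "m \<notin> D" and s: "s \<in> S" and SM: "S \<subseteq> M"
  shows "\<exists>r. is_path_in E (D \<union> S) r \<and> E m (hd r) \<and> last r = s"
proof -
  have DM: "D \<subseteq> M" and Dc: "connected_set E D" and dom: "dominates E D M"
    using cds unfolding connected_dominating_set_def by auto
  obtain d where d: "d \<in> D" "E m d" using dom m unfolding dominates_def by blast
  have sub: "D \<subseteq> D \<union> S" by auto
  show ?thesis
  proof (cases "s \<in> D")
    case True
    then obtain q where q: "is_path_in E D q" "hd q = d" "last q = s" using Dc d unfolding connected_set_def by blast
    then show ?thesis using path_mono[OF q(1) sub] d by blast
  next
    case False
    then obtain d' where d': "d' \<in> D" "E s d'" using dom s SM unfolding dominates_def by blast
    obtain q where q: "is_path_in E D q" "hd q = d" "last q = d'" using Dc d d' unfolding connected_set_def by blast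
    have "is_path_in E (D \<union> S) (q @ [s])"
      apply (rule path_append[OF path_mono[OF q(1) sub] path_single])
      using s False q d' sym by (auto simp: path_def2)
    moreover have "hd (q @ [s]) = d" using q by (auto simp: path_def2)
    ultimately show ?thesis using d by (intro exI[of _ "q @ [s]"]) auto
  qed
qed

theorem theorem3p1:
  fixes V :: "'a set" and E :: "'a \<Rightarrow> 'a \<Rightarrow> bool" and M D S Cmax :: "'a set"
  assumes "graph V E"
    and "connected_set E V"
    and "M \<subseteq> V"
    and "lp_transversal V E M"
    and "connected_dominating_set E M D"
    and "path_maximal V E M Cmax"
    and "S \<subseteq> M"
    and "dominates E S (bd E Cmax M)"
  shows "lp_transversal V E (D \<union> S)"
proof -
  have sym: "\<forall>u v. E u v \<longrightarrow> E v u" and fin: "finite V" using assms(1) unfolding graph_def by auto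
  have DM: "D \<subseteq> M" using assms(5) unfolding connected_dominating_set_def by auto
  have CmaxC: "component E (V - M) Cmax" and pm: "\<And>C. component E (V - M) C \<Longrightarrow> tval E M C \<le> tval E M Cmax"
    using assms(6) unfolding path_maximal_def by auto
  have CV: "Cmax \<subseteq> V - M" using CmaxC unfolding component_def by auto
  have finT: "finite {plen q | q. is_path_in E C q \<and> (hd q \<in> bd E C M \<or> last q \<in> bd E C M)}"
    if "C \<subseteq> V" for C
    by (rule finite_image_set, rule finite_subset[OF _ finite_paths[of C E]]) (use that fin finite_subset in auto)
  show ?thesis unfolding lp_transversal_def
  proof (intro conjI allI impI)
    show "D \<union> S \<subseteq> V" using DM assms(3,7) by auto
    fix p assume lp: "longest_path V E p"
    have pV: "is_path_in E V p" and longest: "\<And>q. is_path_in E V q \<Longrightarrow> plen q \<le> plen p"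
      using lp unfolding longest_path_def by auto
    have pVs: "set p \<subseteq> V" using pV by (auto simp: path_def2)
    show "set p \<inter> (D \<union> S) \<noteq> {}"
    proof
      assume avoid: "set p \<inter> (D \<union> S) = {}"
      have "set p \<inter> M \<noteq> {}" using assms(4) lp unfolding lp_transversal_def by auto
      then obtain xm where xm: "xm \<in> set p" "xm \<in> M" by blast
      have c1: "\<exists>q. is_path_in E V q \<and> plen q > plen p"
        if "p' = p1 @ p2" "is_path_in E V p'" "set p' = set p" "length p' = length p"
           "p1 \<noteq> []" "p2 \<noteq> []" "last p1 \<in> M" "hd p2 \<in> Cmax" for p' p1 p2
      proof -
        have sp: "is_path_in E V p1" "is_path_in E V p2" "set p1 \<inter> set p2 = {}" "E (last p1) (hd p2)"
          using path_split[of E V p1 p2] that by auto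
        have "hd p2 \<in> bd E Cmax M" unfolding bd_def using that(7,8) sp(4) sym by blast
        moreover have "hd p2 \<notin> S" using that CV assms(7) by auto
        ultimately obtain s where s: "s \<in> S" "E (hd p2) s" using assms(8) unfolding dominates_def by blast
        have "last p1 \<in> set p" using that by auto
        then have "last p1 \<notin> D" using avoid by auto
        then obtain r where r: "is_path_in E (D \<union> S) r" "E (last p1) (hd r)" "last r = s"
          using bridge[OF sym assms(5) \<open>last p1 \<in> M\<close> _ s(1) assms(7)] by blast
        have rV: "is_path_in E V r" using path_mono[OF r(1)] DM assms(3,7) by auto
        have rne: "r \<noteq> []" using r by (auto simp: path_def2)
        have rp: "set r \<inter> set p = {}" using r(1) avoid by (auto simp: path_def2)
        have q2: "is_path_in E V (r @ p2)"
          by (rule path_append[OF rV sp(2)]) (use rp that s sym r in auto)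
        have q: "is_path_in E V (p1 @ (r @ p2))"
          by (rule path_append[OF sp(1) q2]) (use rp that sp rne r in auto)
        have "plen (p1 @ (r @ p2)) = plen p1 + plen r + plen p2 + 2"
          using plen_append[of p1 "r @ p2"] plen_append[of r p2] rne that(5,6) by simp
        moreover have "plen p = plen p1 + plen p2 + 1"
        proof -
          have "length p = length p1 + length p2" using that(1,4) by simp
          then show ?thesis using that(5,6) unfolding plen_def by (cases p1; cases p2) auto
        qed
        ultimately show ?thesis using q by (intro exI[of _ "p1 @ (r @ p2)"]) auto
      qed
      have "\<exists>q. is_path_in E V q \<and> plen q > plen p"
      proof (cases "set p \<inter> Cmax = {}")
        case False
        then obtain y where y: "y \<in> set p" "y \<in> Cmax" by blast
        have "xm \<notin> Cmax" using xm CV by auto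
        then obtain p1 p2 where pp: "p = p1 @ p2" "p1 \<noteq> []" "p2 \<noteq> []" "last p1 \<in> Cmax \<longleftrightarrow> hd p2 \<notin> Cmax"
          using cross[OF y xm(1)] by blast
        have sp: "E (last p1) (hd p2)" using path_split[of E V p1 p2] pp pV by auto
        have inV: "last p1 \<in> V" "hd p2 \<in> V" using pp(1-3) pVs last_in_set[of p1] hd_in_set[of p2] by auto
        show ?thesis
        proof (cases "last p1 \<in> Cmax")
          case True
          then have "hd p2 \<notin> Cmax" using pp by auto
          then have "hd p2 \<in> M" using component_closed[OF sym CmaxC True, of "hd p2"] inV sp by auto
          show ?thesis
            apply (rule c1[of "rev p" "rev p2" "rev p1"])
            using pp pV path_rev[OF sym pV] True \<open>hd p2 \<in> M\<close> by (auto simp: last_rev hd_rev)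
        next
          case False
          then have "hd p2 \<in> Cmax" using pp by auto
          then have "last p1 \<in> M" using component_closed[OF sym CmaxC \<open>hd p2 \<in> Cmax\<close>, of "last p1"] inV sp sym False by auto
          show ?thesis
            by (rule c1[of p p1 p2]) (use pp pV \<open>hd p2 \<in> Cmax\<close> \<open>last p1 \<in> M\<close> in auto)
        qed
      next
        case True
        obtain c0 where c0: "c0 \<in> Cmax" using CmaxC unfolding component_def connected_set_def by blast
        obtain w where w: "is_path_in E V w" "hd w = c0" "last w = xm"
          using assms(2) c0 CV xm pVs unfolding connected_set_def by blast
        have "xm \<notin> Cmax" using xm CV by auto
        then obtain w1 w2 where ww: "w = w1 @ w2" "w1 \<noteq> []" "w2 \<noteq> []" "last w1 \<in> Cmax \<longleftrightarrow> hd w2 \<notin> Cmax"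
        proof -
          have "w \<noteq> []" using w(1) by (simp add: path_def2)
          then have "c0 \<in> set w" "xm \<in> set w" using w(2,3) hd_in_set last_in_set by metis+
          then show ?thesis using cross[of c0 w Cmax xm] c0 \<open>xm \<notin> Cmax\<close> that by blast
        qed
        have sw: "E (last w1) (hd w2)" using path_split[of E V w1 w2] ww w by auto
        have inV: "last w1 \<in> V" "hd w2 \<in> V" using ww(1-3) w(1) last_in_set[of w1] hd_in_set[of w2] by (auto simp: path_def2)
        obtain z0 where z0: "z0 \<in> bd E Cmax M"
        proof (cases "last w1 \<in> Cmax")
          case True
          then have "hd w2 \<notin> Cmax" using ww by auto
          then have "hd w2 \<in> M" using component_closed[OF sym CmaxC True, of "hd w2"] inV sw by auto
          then show ?thesis using that True sw unfolding bd_def by blast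
        next
          case False
          then have h: "hd w2 \<in> Cmax" using ww by auto
          then have "last w1 \<in> M" using component_closed[OF sym CmaxC h, of "last w1"] inV sw sym False by auto
          then show ?thesis using that h sw sym unfolding bd_def by blast
        qed
        let ?T = "{plen q | q. is_path_in E Cmax q \<and> (hd q \<in> bd E Cmax M \<or> last q \<in> bd E Cmax M)}"
        have "plen [z0] \<in> ?T" using z0 unfolding bd_def by (auto intro!: path_single)
        then have "?T \<noteq> {}" by blast
        then have "tval E M Cmax \<in> ?T" unfolding tval_def using finT[of Cmax] CV by (intro Max_in) auto
        then obtain c where c: "is_path_in E Cmax c" "hd c \<in> bd E Cmax M \<or> last c \<in> bd E Cmax M" "plen c = tval E M Cmax"
          by auto
        obtain c' where c': "is_path_in E Cmax c'" "last c' \<in> bd E Cmax M" "plen c' = tval E M Cmax"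
        proof (cases "last c \<in> bd E Cmax M")
          case True then show ?thesis using that c by blast
        next
          case False
          then have "hd c \<in> bd E Cmax M" using c by auto
          moreover have "plen (rev c) = plen c" unfolding plen_def by simp
          ultimately show ?thesis using that[of "rev c"] c path_rev[OF sym c(1)] by (auto simp: last_rev)
        qed
        have "last c' \<notin> S" using c'(2) CV assms(7) unfolding bd_def by auto
        then obtain s where s: "s \<in> S" "E (last c') s" using assms(8) c'(2) unfolding dominates_def by blast
        obtain A x R where AxR: "p = A @ x # R" "x \<in> M" "\<forall>y\<in>set A. y \<notin> M"
          using split_list_first_propE[of p "\<lambda>y. y \<in> M"] xm by metis
        have "x \<notin> D" using avoid AxR by auto
        then obtain r where r: "is_path_in E (D \<union> S) r" "E x (hd r)" "last r = s"
          using bridge[OF sym assms(5) \<open>x \<in> M\<close> _ s(1) assms(7)] by blast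
        have rV: "is_path_in E V (rev r)" using path_rev[OF sym path_mono[OF r(1)]] DM assms(3,7) by auto
        have rne: "r \<noteq> []" using r by (auto simp: path_def2)
        have rp: "set r \<inter> set p = {}" using r(1) avoid by (auto simp: path_def2)
        have xR: "is_path_in E V (x # R)" using subpath[of E V A "x # R" "[]"] pV AxR by simp
        have q2: "is_path_in E V (rev r @ (x # R))"
        proof (rule path_append[OF rV xR])
          show "set (rev r) \<inter> set (x # R) = {}" using rp AxR by auto
          have "last (rev r) = hd r" using rne by (simp add: last_rev)
          then show "E (last (rev r)) (hd (x # R))" using r(2) sym by simp
        qed
        have c'V: "is_path_in E V c'" using path_mono[OF c'(1)] CV by auto
        have c'M: "set c' \<subseteq> V - M" using c'(1) CV by (auto simp: path_def2)
        have q: "is_path_in E V (c' @ (rev r @ (x # R)))"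
        proof (rule path_append[OF c'V q2])
          have "set r \<subseteq> M" using r(1) DM assms(7) by (auto simp: path_def2)
          moreover have "set (x # R) \<subseteq> set p" using AxR by auto
          moreover have "set c' \<subseteq> Cmax" using c'(1) by (simp add: path_def2)
          ultimately show "set c' \<inter> set (rev r @ x # R) = {}" using c'M True CV by auto
          have "hd (rev r @ x # R) = s" using rne r(3) by (simp add: hd_rev)
          then show "E (last c') (hd (rev r @ x # R))" using s by simp
        qed
        have c'ne: "c' \<noteq> []" using c' by (auto simp: path_def2)
        have lq: "plen (c' @ (rev r @ (x # R))) = tval E M Cmax + plen r + length R + 2"
        proof -
          have "length r > 0" "length c' > 0" using rne c'ne by auto
          then show ?thesis using c'(3) unfolding plen_def by (simp only: length_append length_rev length_Cons)
        qed
        have "plen p \<le> tval E M Cmax + length R + 1"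
        proof (cases "A = []")
          case True then show ?thesis using AxR unfolding plen_def by auto
        next
          case False
          have sA: "is_path_in E V A" "E (last A) x" using path_split[of E V A "x # R"] pV AxR False by auto
          have AVM: "set A \<subseteq> V - M" using AxR pVs by auto
          obtain Ca where Ca: "component E (V - M) Ca" "set A \<subseteq> Ca"
            using component_exists[OF _ path_connected[OF sym sA(1)] AVM] fin by blast
          have CaV: "Ca \<subseteq> V" using Ca unfolding component_def by auto
          have "is_path_in E Ca A" using sA(1) Ca by (auto simp: path_def2)
          moreover have "last A \<in> bd E Ca M" unfolding bd_def using Ca sA AxR False by auto
          ultimately have "plen A \<le> tval E M Ca" unfolding tval_def
            by (intro Max_ge[OF finT[OF CaV]]) blast
          then have "plen A \<le> tval E M Cmax" using pm[OF Ca(1)] by linarith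
          then show ?thesis using plen_append[of A "x # R"] False AxR unfolding plen_def by auto
        qed
        then show ?thesis using q lq by (intro exI[of _ "c' @ (rev r @ (x # R))"]) auto
      qed
      then show False using longest by force
    qed
  qed
qed

end
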